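(* Let $\mathcal{D}=(\Omega,\mathcal{B})$ be a supersimple $2$-$(n,4,\lambda)$ design satisfying property $(\triangle)$, such that $(\Omega,\mathcal{C})$ is a regular two-graph, where $\mathcal{C}$ is the set of collinear triples of $\mathcal{D}$. Let $\infty\in\Omega$, $G:=\mathcal{L}_\infty(\mathcal{D})$, and $\mathcal{E}:=\{[a,b]\mid a,b\in\Omega\}$. Then $G$ is a subgroup of $\operatorname{Aut}(\mathcal{D})$, and $(G,\mathcal{E})$ is a $3$-transposition group.
   Context: A $2$-$(n,4,\lambda)$ design $(\Omega,\mathcal{B})$: $n$ points, a multiset of $4$-subsets (lines), every $2$-subset in exactly $\lambda$ lines; supersimple: distinct lines meet in at most two points. For distinct $a,b$ with lines $\{a,b,a_i,b_i\}$ ($1\le i\le\lambda$) through them, the elementary move is $[a,b]:=(a,b)\prod_i(a_i,b_i)$; $[a,a]:=1$. Permutations act on the right, products composed left to right; $[a_0,\dots,a_k]:=[a_0,a_1]\cdots[a_{k-1},a_k]$; $\mathcal{L}_\infty(\mathcal{D})$ is the set of all move sequences $[\infty,a_1,\dots,a_k]$, $k\ge1$. Property $(\triangle)$: if $B_1,B_2\in\mathcal{B}$ with $|B_1\cap B_2|=2$ then $B_1\triangle B_2\in\mathcal{B}$. Collinear triple: $3$-subset contained in a line. Regular two-graph: $(\Omega,\mathcal{C})$ is a $2$-$(n,3,\mu)$ design with every $4$-subset containing $0$, $2$ or $4$ members of $\mathcal{C}$. A $3$-transposition group is a pair $(G,\mathcal{E})$, $\mathcal{E}$ a set of involutions with $G=\langle\mathcal{E}\rangle$,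 $\mathcal{E}$ a union of $G$-conjugacy classes, and $gh$ of order $1,2$ or $3$ for all $g,h\in\mathcal{E}$. *)

theory Defs
  imports Main "HOL-Library.Multiset" "HOL-Combinatorics.Permutations"
begin

text \<open>A 2-(n,4,lambda) design on the finite point set Omega (n = card Omega),
  lines form a multiset of 4-subsets.\<close>
definition design_2_4 :: "'a set \<Rightarrow> 'a set multiset \<Rightarrow> nat \<Rightarrow> bool" where
  "design_2_4 \<Omega> \<B> lam \<longleftrightarrow> finite \<Omega> \<and>
     (\<forall>L. L \<in># \<B> \<longrightarrow> L \<subseteq> \<Omega> \<and> card L = 4) \<and>
     (\<forall>x y. x \<in> \<Omega> \<longrightarrow> y \<in> \<Omega> \<longrightarrow> x \<noteq> y \<longrightarrow>
        size (filter_mset (\<lambda>L. {x, y} \<subseteq> L) \<B>) = lam)"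

text \<open>Supersimple: any two distinct lines (distinct occurrences in the multiset)
  meet in at most two points.\<close>
definition supersimple :: "'a set multiset \<Rightarrow> bool" where
  "supersimple \<B> \<longleftrightarrow> (\<forall>L M. L \<in># \<B> \<longrightarrow> M \<in># (\<B> - {#L#}) \<longrightarrow> card (L \<inter> M) \<le> 2)"

definition property_triangle :: "'a set multiset \<Rightarrow> bool" where
  "property_triangle \<B> \<longleftrightarrow>
     (\<forall>L M. L \<in># \<B> \<longrightarrow> M \<in># \<B> \<longrightarrow> card (L \<inter> M) = 2 \<longrightarrow> (L - M) \<union> (M - L) \<in># \<B>)"

definition collinear_triples :: "'a set \<Rightarrow> 'a set multiset \<Rightarrow> 'a set set" where
  "collinear_triples \<Omega> \<B> = {T. T \<subseteq> \<Omega> \<and> card T = 3 \<and> (\<exists>L. L \<in># \<B> \<and> T \<subseteq> L)}"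

definition regular_two_graph :: "'a set \<Rightarrow> 'a set set \<Rightarrow> bool" where
  "regular_two_graph \<Omega> \<C> \<longleftrightarrow>
     (\<forall>T\<in>\<C>. T \<subseteq> \<Omega> \<and> card T = 3) \<and>
     (\<exists>\<mu>::nat. \<forall>x y. x \<in> \<Omega> \<longrightarrow> y \<in> \<Omega> \<longrightarrow> x \<noteq> y \<longrightarrow> card {T\<in>\<C>. {x, y} \<subseteq> T} = \<mu>) \<and>
     (\<forall>F. F \<subseteq> \<Omega> \<longrightarrow> card F = 4 \<longrightarrow> card {T\<in>\<C>. T \<subseteq> F} \<in> {0, 2, 4})"

text \<open>Elementary move [a,b] = (a,b) prod_i (a_i,b_i), over the lines {a,b,a_i,b_i}
  through a and b; [a,a] = 1.  In a supersimple design the transpositions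
  (a_i,b_i) are disjoint, so the product is the following map.\<close>
definition move :: "'a set multiset \<Rightarrow> 'a \<Rightarrow> 'a \<Rightarrow> 'a \<Rightarrow> 'a" where
  "move \<B> a b x =
    (if a = b then x
     else if x = a then b
     else if x = b then a
     else if (\<exists>y. y \<notin> {a, b, x} \<and> {a, b, x, y} \<in># \<B>)
       then (THE y. y \<notin> {a, b, x} \<and> {a, b, x, y} \<in># \<B>)
     else x)"

text \<open>[a_0,...,a_k] = [a_0,a_1]...[a_{k-1},a_k]; permutations act on the right,
  products are composed left to right, so as functions the first factor is applied first.\<close>
fun move_seq :: "'a set multiset \<Rightarrow> 'a list \<Rightarrow> 'a \<Rightarrow> 'a" where
  "move_seq \<B> (a # b # rest) = move_seq \<B> (b # rest) \<circ> move \<B> a b"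
| "move_seq \<B> _ = id"

definition L_inf :: "'a set \<Rightarrow> 'a set multiset \<Rightarrow> 'a \<Rightarrow> ('a \<Rightarrow> 'a) set" where
  "L_inf \<Omega> \<B> inf0 = {move_seq \<B> (inf0 # as) | as. as \<noteq> [] \<and> set as \<subseteq> \<Omega>}"

definition Aut :: "'a set \<Rightarrow> 'a set multiset \<Rightarrow> ('a \<Rightarrow> 'a) set" where
  "Aut \<Omega> \<B> = {p. p permutes \<Omega> \<and> image_mset (image p) \<B> = \<B>}"

definition is_subgroup_of :: "('a \<Rightarrow> 'a) set \<Rightarrow> ('a \<Rightarrow> 'a) set \<Rightarrow> bool" where
  "is_subgroup_of G H \<longleftrightarrow> G \<subseteq> H \<and> id \<in> G \<and>
     (\<forall>g\<in>G. \<forall>h\<in>G. h \<circ> g \<in> G) \<and> (\<forall>g\<in>G. inv g \<in> G)"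

inductive_set gen_group :: "('a \<Rightarrow> 'a) set \<Rightarrow> ('a \<Rightarrow> 'a) set" for E where
  gen_id: "id \<in> gen_group E"
| gen_base: "e \<in> E \<Longrightarrow> e \<in> gen_group E"
| gen_mult: "g \<in> gen_group E \<Longrightarrow> h \<in> gen_group E \<Longrightarrow> h \<circ> g \<in> gen_group E"
| gen_inv: "g \<in> gen_group E \<Longrightarrow> inv g \<in> gen_group E"

definition three_transposition_group :: "('a \<Rightarrow> 'a) set \<Rightarrow> ('a \<Rightarrow> 'a) set \<Rightarrow> bool" where
  "three_transposition_group G E \<longleftrightarrow>
     (\<forall>e\<in>E. e \<circ> e = id \<and> e \<noteq> id) \<and>
     G = gen_group E \<and>
     (\<forall>g\<in>G. \<forall>e\<in>E. g \<circ> e \<circ> inv g \<in> E) \<and>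
     (\<forall>g\<in>E. \<forall>h\<in>E. (h \<circ> g) ^^ 2 = id \<or> (h \<circ> g) ^^ 3 = id)"

end

theory Submission
  imports Defs
begin



lemma card4_obtain: "card S = 4 \<Longrightarrow> \<exists>p q r s. S = {p,q,r,s} \<and> distinct [p,q,r,s]"
  by (auto simp: card_Suc_eq numeral_eq_Suc)

lemma card3_obtain: "card S = 3 \<Longrightarrow> \<exists>p q r. S = {p,q,r} \<and> distinct [p,q,r]"
  by (auto simp: card_Suc_eq numeral_eq_Suc)

lemma card_filter_sum: "finite A \<Longrightarrow> card {x\<in>A. P x} = (\<Sum>x\<in>A. if P x then 1 else 0)"
  by (simp add: sum.If_cases Int_def)

locale DD =
  fixes \<Omega> :: "'a set" and B :: "'a set multiset" and lam :: nat
  assumes des: "design_2_4 \<Omega> B lam" and ss: "supersimple B" and tri: "property_triangle B"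
    and rtg: "regular_two_graph \<Omega> (collinear_triples \<Omega> B)"
begin

lemma line_props: "L \<in># B \<Longrightarrow> L \<subseteq> \<Omega> \<and> card L = 4 \<and> finite L"
proof -
  have "finite \<Omega>" "\<forall>L. L \<in># B \<longrightarrow> L \<subseteq> \<Omega> \<and> card L = 4" using des unfolding design_2_4_def by auto
  then show "L \<in># B \<Longrightarrow> L \<subseteq> \<Omega> \<and> card L = 4 \<and> finite L" using finite_subset by blast
qed

lemma line_inter: "L \<in># B \<Longrightarrow> M \<in># B \<Longrightarrow> L \<noteq> M \<Longrightarrow> card (L \<inter> M) \<le> 2"
proof -
  assume a: "L \<in># B" "M \<in># B" "L \<noteq> M"
  then have "M \<in># B - {#L#}" by (simp add: in_diff_count)
  then show ?thesis using ss a unfolding supersimple_def by blast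
qed

lemma count_le1: "count B L \<le> 1"
proof (rule ccontr)
  assume "\<not> count B L \<le> 1"
  then have "count B L \<ge> 2" by simp
  then have "L \<in># B - {#L#}" by (simp add: in_diff_count)
  moreover have "L \<in># B"
  proof -
    show ?thesis using \<open>count B L \<ge> 2\<close> not_in_iff[of L B] by fastforce
  qed
  ultimately have "card (L \<inter> L) \<le> 2" using ss unfolding supersimple_def by blast
  then show False using line_props[OF \<open>L \<in># B\<close>] by simp
qed

lemma line_distinct: "{p,q,r,s} \<in># B \<Longrightarrow> distinct [p,q,r,s]"
  by (rule card_distinct) (use line_props[of "{p,q,r,s}"] in simp)

lemma line_sub: "{p,q,r,s} \<in># B \<Longrightarrow> p \<in> \<Omega> \<and> q \<in> \<Omega> \<and> r \<in> \<Omega> \<and> s \<in> \<Omega>"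
  using line_props[of "{p,q,r,s}"] by auto

lemma line3_eq:
  assumes "L \<in># B" "M \<in># B" "{x,y,z} \<subseteq> L" "{x,y,z} \<subseteq> M" "distinct [x,y,z]"
  shows "L = M"
proof (rule ccontr)
  assume "L \<noteq> M"
  then have "card (L \<inter> M) \<le> 2" using assms line_inter by blast
  moreover have "card {x,y,z} \<le> card (L \<inter> M)"
    by (rule card_mono) (use assms line_props in auto)
  moreover have "card {x,y,z} = 3" using assms(5) by simp
  ultimately show False by linarith
qed

lemma tri4:
  assumes L: "{p,q,r,s} \<in># B" and M: "{p,q,u,v} \<in># B" and ne: "{p,q,r,s} \<noteq> {p,q,u,v}"
  shows "{r,s,u,v} \<in># B \<and> r \<notin> {u,v} \<and> s \<notin> {u,v}"
proof -
  have d1: "distinct [p,q,r,s]" using line_distinct[OF L] .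
  have d2: "distinct [p,q,u,v]" using line_distinct[OF M] .
  have r: "r \<notin> {u,v}"
  proof
    assume "r \<in> {u,v}"
    then have "{p,q,r} \<subseteq> {p,q,u,v}" by auto
    then show False using line3_eq[OF L M, of p q r] d1 ne by auto
  qed
  have s: "s \<notin> {u,v}"
  proof
    assume "s \<in> {u,v}"
    then have "{p,q,s} \<subseteq> {p,q,u,v}" by auto
    then show False using line3_eq[OF L M, of p q s] d1 ne by auto
  qed
  have u: "u \<notin> {p,q,r,s}" "v \<notin> {p,q,r,s}" using r s d2 by auto
  have r2: "r \<notin> {p,q,u,v}" "s \<notin> {p,q,u,v}" using r s d1 by auto
  have I: "{p,q,r,s} \<inter> {p,q,u,v} = {p,q}" using r s by auto
  have "card ({p,q,r,s} \<inter> {p,q,u,v}) = 2" unfolding I using d1 by simp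
  then have "({p,q,r,s} - {p,q,u,v}) \<union> ({p,q,u,v} - {p,q,r,s}) \<in># B"
    using tri L M unfolding property_triangle_def by blast
  moreover have "({p,q,r,s} - {p,q,u,v}) \<union> ({p,q,u,v} - {p,q,r,s}) = {r,s,u,v}"
    using u r2 by blast
  ultimately show ?thesis using r s by simp
qed

definition col :: "'a \<Rightarrow> 'a \<Rightarrow> 'a \<Rightarrow> bool" where
  "col x y z \<longleftrightarrow> (\<exists>L. L \<in># B \<and> x \<in> L \<and> y \<in> L \<and> z \<in> L)"

lemma col_sym1: "col x y z = col y x z" unfolding col_def by blast
lemma col_sym2: "col x y z = col x z y" unfolding col_def by blast

lemma col_ex:
  assumes "distinct [x,y,z]" "col x y z"
  shows "\<exists>w. {x,y,z,w} \<in># B \<and> w \<notin> {x,y,z}"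
proof -
  obtain L where L: "L \<in># B" "x \<in> L" "y \<in> L" "z \<in> L" using assms(2) col_def by auto
  have "card (L - {x,y,z}) = 1"
  proof -
    have "card (L - {x,y,z}) = card L - card {x,y,z}" by (rule card_Diff_subset) (use L in auto)
    moreover have "card {x,y,z} = 3" using assms(1) by simp
    ultimately show ?thesis using line_props[OF L(1)] by simp
  qed
  then obtain w where w: "L - {x,y,z} = {w}" by (meson card_1_singletonE)
  have wL: "w \<in> L - {x,y,z}" using w by simp
  have "L = {x,y,z,w}" using L w by blast
  then show ?thesis using L(1) wL by blast
qed

lemma line_col: "{x,y,z,w} \<in># B \<Longrightarrow> col x y z"
  unfolding col_def by blast

end


context DD begin

lemma colC:
  assumes "distinct [x,y,z]" "x \<in> \<Omega>" "y \<in> \<Omega>" "z \<in> \<Omega>"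
  shows "{x,y,z} \<in> collinear_triples \<Omega> B \<longleftrightarrow> col x y z"
  using assms unfolding collinear_triples_def col_def by auto

lemma parity:
  assumes d: "distinct [p,q,r,s]" and om: "p \<in> \<Omega>" "q \<in> \<Omega>" "r \<in> \<Omega>" "s \<in> \<Omega>"
  shows "(col q r s = col p r s) = (col p q s = col p q r)"
proof -
  define C where "C = collinear_triples \<Omega> B"
  define F where "F = {p,q,r,s}"
  have FO: "F \<subseteq> \<Omega>" "card F = 4" using d om unfolding F_def by auto
  have c: "card {T\<in>C. T \<subseteq> F} \<in> {0,2,4}"
    using rtg FO unfolding regular_two_graph_def C_def by blast
  have eq: "{T\<in>C. T \<subseteq> F} = {X \<in> {{q,r,s},{p,r,s},{p,q,s},{p,q,r}}. X \<in> C}"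
  proof
    show "{X \<in> {{q,r,s},{p,r,s},{p,q,s},{p,q,r}}. X \<in> C} \<subseteq> {T\<in>C. T \<subseteq> F}"
      unfolding F_def by auto
    show "{T\<in>C. T \<subseteq> F} \<subseteq> {X \<in> {{q,r,s},{p,r,s},{p,q,s},{p,q,r}}. X \<in> C}"
    proof
      fix T assume T: "T \<in> {T\<in>C. T \<subseteq> F}"
      then have TC: "T \<in> C" "T \<subseteq> F" by auto
      then have c3: "card T = 3" unfolding C_def collinear_triples_def by auto
      have "\<exists>u\<in>F. u \<notin> T"
      proof (rule ccontr)
        assume "\<not> (\<exists>u\<in>F. u \<notin> T)"
        then have "F \<subseteq> T" by auto
        then have "card F \<le> card T" using c3 by (intro card_mono) (auto intro: card_ge_0_finite)
        then show False using FO c3 by simp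
      qed
      then obtain u where u: "u \<in> F" "u \<notin> T" by blast
      have sub: "T \<subseteq> F - {u}" using TC u by auto
      have cu: "card (F - {u}) = 3" using FO u by simp
      have "T = F - {u}" using card_subset_eq[OF _ sub] cu c3 FO
        by (metis card.infinite finite_Diff zero_neq_numeral)
      moreover have "F - {u} \<in> {{q,r,s},{p,r,s},{p,q,s},{p,q,r}}"
        using u d unfolding F_def by auto
      ultimately show "T \<in> {X \<in> {{q,r,s},{p,r,s},{p,q,s},{p,q,r}}. X \<in> C}" using TC by auto
    qed
  qed
  have ne: "{q,r,s} \<noteq> {p,r,s}" "{q,r,s} \<noteq> {p,q,s}" "{q,r,s} \<noteq> {p,q,r}"
    "{p,r,s} \<noteq> {p,q,s}" "{p,r,s} \<noteq> {p,q,r}" "{p,q,s} \<noteq> {p,q,r}"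
    using d by (auto simp: insert_eq_iff)
  have "card {X \<in> {{q,r,s},{p,r,s},{p,q,s},{p,q,r}}. X \<in> C} =
    (if {q,r,s} \<in> C then 1 else 0) + (if {p,r,s} \<in> C then 1 else 0) +
    (if {p,q,s} \<in> C then 1 else 0) + (if {p,q,r} \<in> C then 1 else (0::nat))"
    by (subst card_filter_sum) (use ne in auto)
  moreover have "{q,r,s} \<in> C \<longleftrightarrow> col q r s" "{p,r,s} \<in> C \<longleftrightarrow> col p r s"
    "{p,q,s} \<in> C \<longleftrightarrow> col p q s" "{p,q,r} \<in> C \<longleftrightarrow> col p q r"
    unfolding C_def using d om colC by simp_all
  ultimately show ?thesis using c eq
    by (cases "col q r s"; cases "col p r s"; cases "col p q s"; cases "col p q r"; simp)
qed

lemma move_a: "move B a b a = b" unfolding move_def by simp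
lemma move_b: "move B a b b = a" unfolding move_def by simp
lemma move_id: "move B a a = id" unfolding move_def by (simp add: fun_eq_iff)

lemma move_line:
  assumes L: "{a,b,x,y} \<in># B"
  shows "move B a b x = y"
proof -
  have d: "distinct [a,b,x,y]" using line_distinct[OF L] .
  have "(THE y. y \<notin> {a, b, x} \<and> {a, b, x, y} \<in># B) = y"
  proof (rule the_equality)
    show "y \<notin> {a, b, x} \<and> {a, b, x, y} \<in># B" using d L by auto
    fix y' assume y': "y' \<notin> {a, b, x} \<and> {a, b, x, y'} \<in># B"
    then have "{a,b,x,y'} = {a,b,x,y}" using line3_eq[of "{a,b,x,y'}" "{a,b,x,y}" a b x] L d by auto
    then show "y' = y" using y' by (metis insertI1 insert_commute insert_iff)
  qed
  then show ?thesis using d L unfolding move_def by auto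
qed

lemma move_nocol:
  assumes "a \<noteq> b" "x \<noteq> a" "x \<noteq> b" "\<not> col a b x"
  shows "move B a b x = x"
  using assms line_col unfolding move_def by (metis)

lemma move_sym: "move B a b = move B b a"
  unfolding move_def by (auto simp: fun_eq_iff insert_commute)

end


context DD begin

lemma move_invol: "move B a b (move B a b x) = x"
proof (cases "a = b")
  case True then show ?thesis by (simp add: move_id)
next
  case ab: False
  show ?thesis
  proof (cases "x = a \<or> x = b")
    case True then show ?thesis using move_a move_b by auto
  next
    case False
    show ?thesis
    proof (cases "col a b x")
      case True
      then obtain w where w: "{a,b,x,w} \<in># B" using col_ex[of a b x] ab False by auto
      have "{a,b,w,x} = {a,b,x,w}" by auto
      then show ?thesis using move_line[OF w] move_line[of a b w x] w by simp
    next
      case nc: False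
      then show ?thesis using move_nocol ab False by simp
    qed
  qed
qed

lemma move_inj: "inj (move B a b)"
  by (rule injI) (metis move_invol)

lemma move_out: "a \<in> \<Omega> \<Longrightarrow> b \<in> \<Omega> \<Longrightarrow> x \<notin> \<Omega> \<Longrightarrow> move B a b x = x"
proof -
  assume "a \<in> \<Omega>" "b \<in> \<Omega>" "x \<notin> \<Omega>"
  moreover have "\<not> col a b x" using \<open>x \<notin> \<Omega>\<close> line_props unfolding col_def by blast
  ultimately show ?thesis by (cases "a = b") (auto simp: move_id intro: move_nocol)
qed

lemma move_in: "a \<in> \<Omega> \<Longrightarrow> b \<in> \<Omega> \<Longrightarrow> x \<in> \<Omega> \<Longrightarrow> move B a b x \<in> \<Omega>"
proof -
  assume o: "a \<in> \<Omega>" "b \<in> \<Omega>" "x \<in> \<Omega>"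
  show ?thesis
  proof (cases "a = b \<or> x = a \<or> x = b")
    case True then show ?thesis using o move_a move_b move_id by auto
  next
    case False
    show ?thesis
    proof (cases "col a b x")
      case True
      then obtain w where w: "{a,b,x,w} \<in># B" using col_ex[of a b x] False by auto
      then show ?thesis using move_line[OF w] line_sub[OF w] by simp
    next
      case nc: False
      then show ?thesis using move_nocol False o by simp
    qed
  qed
qed

lemma perm4: "{p,q,r,s} = {r,s,p,q}" "{p,q,r,s} = {q,p,r,s}" "{p,q,r,s} = {p,q,s,r}"
  "{p,q,r,s} = {p,r,q,s}" by auto

lemma swap:
  assumes L: "{p,q,r,s} \<in># B"
  shows "move B p q = move B r s"
proof (rule ext)
  fix x
  have d: "distinct [p,q,r,s]" using line_distinct[OF L] .
  have Lr: "{r,s,p,q} \<in># B" using L perm4 by metis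
  have L2: "{r,s,q,p} \<in># B" using L by (metis perm4)
  have L3: "{p,q,s,r} \<in># B" using L by (metis perm4)
  show "move B p q x = move B r s x"
  proof (cases "x \<in> {p,q,r,s}")
    case True
    then show ?thesis using move_a move_b move_line[OF L] move_line[OF Lr] move_line[OF L2]
        move_line[OF L3] by auto
  next
    case False
    show ?thesis
    proof (cases "col p q x")
      case True
      then obtain y where y: "{p,q,x,y} \<in># B" using col_ex[of p q x] d False by auto
      have "{p,q,r,s} \<noteq> {p,q,x,y}" using False by auto
      then have "{r,s,x,y} \<in># B" using tri4[OF L y] by simp
      then show ?thesis using move_line y by metis
    next
      case nc: False
      have "\<not> col r s x"
      proof
        assume "col r s x"
        then obtain y where y: "{r,s,x,y} \<in># B" using col_ex[of r s x] d False by auto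
        have "{r,s,p,q} \<noteq> {r,s,x,y}" using False by auto
        then have "{p,q,x,y} \<in># B" using tri4[OF Lr y] by simp
        then show False using nc line_col by blast
      qed
      then show ?thesis using nc move_nocol d False by auto
    qed
  qed
qed

end


context DD begin

lemma opA:
  assumes d: "distinct [a,b,x,y,z]" and ab: "a \<in> \<Omega>" "b \<in> \<Omega>" and L: "{a,x,y,z} \<in># B"
    and nx: "\<not> col a b x" and ny: "\<not> col a b y" and nz: "\<not> col a b z"
  shows "{b,x,y,z} \<in># B"
proof -
  have o: "x \<in> \<Omega>" "y \<in> \<Omega>" "z \<in> \<Omega>" using line_sub[OF L] by auto
  have "col a x y" using line_col L by blast
  then have "col b x y" using parity[of a b x y] d ab o nx ny by auto
  then obtain w where w: "{b,x,y,w} \<in># B" "w \<notin> {b,x,y}" using col_ex[of b x y] d by auto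
  show ?thesis
  proof (cases "w = z")
    case True then show ?thesis using w by simp
  next
    case False
    have L1: "{x,y,a,z} \<in># B" using L by (simp add: insert_commute)
    have L2: "{x,y,b,w} \<in># B" using w by (simp add: insert_commute)
    have "{x,y,a,z} \<noteq> {x,y,b,w}" using d by auto
    then have "{a,z,b,w} \<in># B" using tri4[OF L1 L2] by simp
    then have "col a b z" unfolding col_def by blast
    then show ?thesis using nz by simp
  qed
qed

lemma opB:
  assumes d: "distinct [a,b,x,y,z]" and L: "{a,x,y,z} \<in># B" and M: "{a,b,x,x'} \<in># B"
  shows "{b,x',y,z} \<in># B"
proof -
  have M1: "{a,x,b,x'} \<in># B" using M by (simp add: insert_commute)
  have "{a,x,b,x'} \<noteq> {a,x,y,z}" using d by auto
  then have "{b,x',y,z} \<in># B" using tri4[OF M1 L] by simp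
  then show ?thesis .
qed

lemma opC:
  assumes d: "distinct [a,b,x,y,z]" and ab: "a \<in> \<Omega>" "b \<in> \<Omega>" and L: "{a,x,y,z} \<in># B"
    and Mx: "{a,b,x,x'} \<in># B" and My: "{a,b,y,y'} \<in># B"
  shows "\<exists>z'. {a,b,z,z'} \<in># B \<and> {b,x',y',z'} \<in># B"
proof -
  have o: "x \<in> \<Omega>" "y \<in> \<Omega>" "z \<in> \<Omega>" using line_sub[OF L] by auto
  have dx: "distinct [a,b,x,x']" using line_distinct[OF Mx] .
  have dy: "distinct [a,b,y,y']" using line_distinct[OF My] .
  have N: "{b,x',y,z} \<in># B" using opB[OF d L Mx] .
  have N2: "{b,y',x,z} \<in># B" using opB[of a b y x z y'] d L My by (auto simp: insert_commute)
  have "col b z x" using N2 unfolding col_def by blast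
  moreover have "col a z x" using L unfolding col_def by blast
  moreover have "col a b x" using Mx unfolding col_def by blast
  ultimately have "col a b z" using parity[of a b z x] d ab o by auto
  then obtain z' where Mz: "{a,b,z,z'} \<in># B" using col_ex[of a b z] d by auto
  have dz: "distinct [a,b,z,z']" using line_distinct[OF Mz] .
  have N1: "{b,y,x',z} \<in># B" using N by (simp add: insert_commute)
  have My1: "{b,y,a,y'} \<in># B" using My by (simp add: insert_commute)
  have "{b,y,x',z} \<noteq> {b,y,a,y'}" using d dx by auto
  then have P: "{x',z,a,y'} \<in># B" using tri4[OF N1 My1] by simp
  have P1: "{a,z,x',y'} \<in># B" using P by (simp add: insert_commute)
  have Mz1: "{a,z,b,z'} \<in># B" using Mz by (simp add: insert_commute)
  have "b \<notin> {a,z,x',y'}" using d dx dy by auto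
  then have "{a,z,x',y'} \<noteq> {a,z,b,z'}" by blast
  then have "{x',y',b,z'} \<in># B" using tri4[OF P1 Mz1] by simp
  then have "{b,x',y',z'} \<in># B" by (simp add: insert_commute)
  then show ?thesis using Mz by blast
qed

lemma move_cases:
  assumes "a \<noteq> b" "t \<noteq> a" "t \<noteq> b"
  shows "(col a b t \<and> {a,b,t,move B a b t} \<in># B) \<or> (\<not> col a b t \<and> move B a b t = t)"
proof (cases "col a b t")
  case True
  then obtain w where w: "{a,b,t,w} \<in># B" using col_ex[of a b t] assms by auto
  then show ?thesis using move_line[OF w] True by simp
next
  case False then show ?thesis using move_nocol assms by simp
qed

lemma one_point:
  assumes d: "distinct [a,b,x,y,z]" and ab: "a \<in> \<Omega>" "b \<in> \<Omega>" and L: "{a,x,y,z} \<in># B"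
  shows "move B a b ` {a,x,y,z} \<in># B"
proof -
  let ?s = "move B a b"
  have img: "?s ` {a,x,y,z} = {b, ?s x, ?s y, ?s z}" by (simp add: move_a)
  have cx: "(col a b x \<and> {a,b,x,?s x} \<in># B) \<or> (\<not> col a b x \<and> ?s x = x)"
    using move_cases[of a b x] d by auto
  have cy: "(col a b y \<and> {a,b,y,?s y} \<in># B) \<or> (\<not> col a b y \<and> ?s y = y)"
    using move_cases[of a b y] d by auto
  have cz: "(col a b z \<and> {a,b,z,?s z} \<in># B) \<or> (\<not> col a b z \<and> ?s z = z)"
    using move_cases[of a b z] d by auto
  have Lxzy: "{a,x,z,y} \<in># B" using L by (simp add: insert_commute)
  have Lyzx: "{a,y,z,x} \<in># B" using L by (simp add: insert_commute)
  have Lyxz: "{a,y,x,z} \<in># B" using L by (simp add: insert_commute)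
  have Lzxy: "{a,z,x,y} \<in># B" using L by (simp add: insert_commute)
  have dxzy: "distinct [a,b,x,z,y]" using d by auto
  have dyzx: "distinct [a,b,y,z,x]" using d by auto
  have dyxz: "distinct [a,b,y,x,z]" using d by auto
  have dzxy: "distinct [a,b,z,x,y]" using d by auto
  have C: "\<And>x y z. distinct [a,b,x,y,z] \<Longrightarrow> {a,x,y,z} \<in># B \<Longrightarrow> {a,b,x,?s x} \<in># B \<Longrightarrow>
      {a,b,y,?s y} \<in># B \<Longrightarrow> {b, ?s x, ?s y, ?s z} \<in># B"
  proof -
    fix x y z assume d: "distinct [a,b,x,y,z]" and L: "{a,x,y,z} \<in># B" and
      Mx: "{a,b,x,?s x} \<in># B" and My: "{a,b,y,?s y} \<in># B"
    obtain z' where z': "{a,b,z,z'} \<in># B" "{b,?s x,?s y,z'} \<in># B"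
      using opC[OF d ab L Mx My] by blast
    then show "{b, ?s x, ?s y, ?s z} \<in># B" using move_line[OF z'(1)] by simp
  qed
  show ?thesis unfolding img
  proof -
    consider "col a b x" "col a b y" | "col a b x" "col a b z" | "col a b y" "col a b z"
      | "col a b x" "\<not> col a b y" "\<not> col a b z"
      | "\<not> col a b x" "col a b y" "\<not> col a b z"
      | "\<not> col a b x" "\<not> col a b y" "col a b z"
      | "\<not> col a b x" "\<not> col a b y" "\<not> col a b z" by blast
    then show "{b, ?s x, ?s y, ?s z} \<in># B"
    proof cases
      case 1 then show ?thesis using C[OF d L] cx cy by blast
    next
      case 2 then have "{b, ?s x, ?s z, ?s y} \<in># B" using C[OF dxzy Lxzy] cx cz by blast
      then show ?thesis by (simp add: insert_commute)
    next
      case 3 then have "{b, ?s y, ?s z, ?s x} \<in># B" using C[OF dyzx Lyzx] cy cz by blast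
      then show ?thesis by (simp add: insert_commute)
    next
      case 4 then show ?thesis using opB[OF d L] cx cy cz by metis
    next
      case 5 then have "{b, ?s y, x, z} \<in># B" using opB[OF dyxz Lyxz] cy by metis
      then show ?thesis using 5 cx cz by (simp add: insert_commute)
    next
      case 6 then have "{b, ?s z, x, y} \<in># B" using opB[OF dzxy Lzxy] cz by metis
      then show ?thesis using 6 cx cy by (simp add: insert_commute)
    next
      case 7 then show ?thesis using opA[OF d ab L] cx cy cz by simp
    qed
  qed
qed

end


context DD begin

lemma line_obtain_pt:
  assumes L: "L \<in># B" and a: "a \<in> L"
  shows "\<exists>x y z. L = {a,x,y,z} \<and> distinct [a,x,y,z]"
proof -
  have "card (L - {a}) = 3" using line_props[OF L] a by simp
  then obtain x y z where "L - {a} = {x,y,z}" "distinct [x,y,z]" using card3_obtain by blast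
  then show ?thesis using a by (metis Diff_iff insert_Diff distinct.simps(2) insertCI list.set(1,2))
qed

lemma aut_line_a:
  assumes ab: "a \<noteq> b" "a \<in> \<Omega>" "b \<in> \<Omega>" and L: "L \<in># B" and a: "a \<in> L"
  shows "move B a b ` L \<in># B"
proof -
  obtain x y z where Lx: "L = {a,x,y,z}" "distinct [a,x,y,z]" using line_obtain_pt[OF L a] by blast
  let ?s = "move B a b"
  have two: "\<And>y z. {a,b,y,z} \<in># B \<Longrightarrow> ?s ` {a,b,y,z} \<in># B"
  proof -
    fix y z assume M: "{a,b,y,z} \<in># B"
    have M2: "{a,b,z,y} \<in># B" using M by (simp add: insert_commute)
    have "?s ` {a,b,y,z} = {b,a,z,y}" using move_line[OF M] move_line[OF M2] by (simp add: move_a move_b)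
    then show "?s ` {a,b,y,z} \<in># B" using M by (simp add: insert_commute)
  qed
  show ?thesis
  proof (cases "b \<in> L")
    case True
    then consider "b = x" | "b = y" | "b = z" using Lx ab by auto
    then show ?thesis
    proof cases
      case 1 then show ?thesis using two L Lx by simp
    next
      case 2 then have "L = {a,b,x,z}" using Lx by auto
      then show ?thesis using two L by simp
    next
      case 3 then have "L = {a,b,x,y}" using Lx by auto
      then show ?thesis using two L by simp
    qed
  next
    case False
    then have "distinct [a,b,x,y,z]" using Lx ab by auto
    then show ?thesis using one_point ab L Lx by simp
  qed
qed

lemma sym_diff_image:
  assumes "inj f"
  shows "(f ` K - f ` K') \<union> (f ` K' - f ` K) = f ` ((K - K') \<union> (K' - K))"
  by (simp add: image_Un image_set_diff[OF assms])

lemma disj_sub: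
  assumes ab: "a \<noteq> b" "a \<in> \<Omega>" "b \<in> \<Omega>" and d: "distinct [a,w,x,y,z]" and bL: "b \<notin> {w,x,y,z}"
    and L: "{w,x,y,z} \<in># B" and c: "col a w x"
  shows "move B a b ` {w,x,y,z} \<in># B"
proof -
  let ?s = "move B a b"
  obtain r where K: "{a,w,x,r} \<in># B" using col_ex[of a w x] c d by auto
  have dK: "distinct [a,w,x,r]" using line_distinct[OF K] .
  have K1: "{w,x,a,r} \<in># B" using K by (simp add: insert_commute)
  have "{w,x,a,r} \<noteq> {w,x,y,z}" using d by auto
  then have K': "{a,r,y,z} \<in># B" and ry: "a \<notin> {y,z}" "r \<notin> {y,z}" using tri4[OF K1 L] by auto
  have I: "{a,w,x,r} \<inter> {a,r,y,z} = {a,r}" using d dK ry by auto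
  have SD: "({a,w,x,r} - {a,r,y,z}) \<union> ({a,r,y,z} - {a,w,x,r}) = {w,x,y,z}" using d dK ry by auto
  have sK: "?s ` {a,w,x,r} \<in># B" using aut_line_a[OF ab K] by simp
  have sK': "?s ` {a,r,y,z} \<in># B" using aut_line_a[OF ab K'] by simp
  have inj: "inj ?s" by (rule move_inj)
  have "?s ` {a,w,x,r} \<inter> ?s ` {a,r,y,z} = ?s ` {a,r}"
    unfolding image_Int[OF inj, symmetric] I ..
  moreover have "card (?s ` {a,r}) = card {a,r}"
    by (rule card_image) (rule inj_on_subset[OF inj subset_UNIV])
  moreover have "card {a,r} = 2" using dK by simp
  ultimately have "card (?s ` {a,w,x,r} \<inter> ?s ` {a,r,y,z}) = 2" by simp
  then have "(?s ` {a,w,x,r} - ?s ` {a,r,y,z}) \<union> (?s ` {a,r,y,z} - ?s ` {a,w,x,r}) \<in># B"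
    using tri sK sK' unfolding property_triangle_def by blast
  then show ?thesis unfolding sym_diff_image[OF inj] SD .
qed

lemma aut_line:
  assumes ab: "a \<in> \<Omega>" "b \<in> \<Omega>" and L: "L \<in># B"
  shows "move B a b ` L \<in># B"
proof (cases "a = b")
  case True then show ?thesis using L by (simp add: move_id)
next
  case ne: False
  show ?thesis
  proof (cases "a \<in> L")
    case True then show ?thesis using aut_line_a ne ab L by blast
  next
    case aL: False
    show ?thesis
    proof (cases "b \<in> L")
      case True
      then have "move B b a ` L \<in># B" using aut_line_a[of b a L] ne ab L by auto
      then show ?thesis by (simp add: move_sym)
    next
      case bL: False
      obtain w x y z where Lw: "L = {w,x,y,z}" "distinct [w,x,y,z]"
      proof -
        have "card L = 4" using line_props[OF L] by simp
        from card4_obtain[OF this] show ?thesis using that by blast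
      qed
      have L4: "{w,x,y,z} \<in># B" using L Lw(1) by simp
      have o: "w \<in> \<Omega>" "x \<in> \<Omega>" "y \<in> \<Omega>" "z \<in> \<Omega>" using line_sub[OF L4] by auto
      have d: "distinct [a,w,x,y,z]" using Lw aL by auto
      have "col w x y" using line_col[OF L4] .
      moreover have "(col w x y = col a x y) = (col a w y = col a w x)"
        using parity[of a w x y] d ab o by simp
      ultimately have "col a w x \<or> col a w y \<or> col a x y" by blast
      then consider "col a w x" | "col a w y" | "col a x y" by blast
      then show ?thesis
      proof cases
        case 1 then show ?thesis using disj_sub[OF ne ab d] bL Lw L by simp
      next
        case 2
        have "distinct [a,w,y,x,z]" using d by auto
        moreover have "{w,y,x,z} = L" using Lw by auto
        ultimately show ?thesis using disj_sub[OF ne ab, of w y x z] bL L 2 by simp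
      next
        case 3
        have "distinct [a,x,y,w,z]" using d by auto
        moreover have "{x,y,w,z} = L" using Lw by auto
        ultimately show ?thesis using disj_sub[OF ne ab, of x y w z] bL L 3 by simp
      qed
    qed
  qed
qed

lemma Aut_invol:
  assumes inv: "\<And>x. f (f x) = x" and out: "\<And>x. x \<notin> \<Omega> \<Longrightarrow> f x = x"
    and lines: "\<And>L. L \<in># B \<Longrightarrow> f ` L \<in># B"
  shows "f \<in> Aut \<Omega> B"
proof -
  have perm: "f permutes \<Omega>" unfolding permutes_def
  proof (intro conjI allI impI)
    fix x assume "x \<notin> \<Omega>" then show "f x = x" by (rule out)
  next
    fix y show "\<exists>!x. f x = y"
    proof (rule ex1I[of _ "f y"])
      show "f (f y) = y" by (rule inv)
    next
      fix x assume "f x = y" then show "x = f y" using inv by metis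
    qed
  qed
  let ?F = "image f"
  have FF: "\<And>X. ?F (?F X) = X" using inv by (simp add: image_image)
  have "image_mset ?F B = B"
  proof (rule multiset_eqI)
    fix L
    have pre: "?F -` {L} = {?F L}" using FF by auto
    have "count (image_mset ?F B) L = sum (count B) ({?F L} \<inter> set_mset B)"
      by (simp add: count_image_mset pre)
    also have "\<dots> = count B (?F L)" by (cases "?F L \<in># B") (auto simp: not_in_iff)
    also have "\<dots> = count B L"
    proof (cases "L \<in># B")
      case True
      then have "?F L \<in># B" by (rule lines)
      have "0 < count B L" using True by simp
      moreover have "0 < count B (?F L)" using \<open>?F L \<in># B\<close> by simp
      ultimately show ?thesis using count_le1[of L] count_le1[of "?F L"] by linarith
    next
      case False
      have "?F L \<notin># B"
      proof
        assume "?F L \<in># B"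
        then have "?F (?F L) \<in># B" by (rule lines)
        then show False using False FF by simp
      qed
      then show ?thesis using False by (simp add: not_in_iff)
    qed
    finally show "count (image_mset ?F B) L = count B L" .
  qed
  then show ?thesis using perm unfolding Aut_def by simp
qed

lemma move_Aut: "a \<in> \<Omega> \<Longrightarrow> b \<in> \<Omega> \<Longrightarrow> move B a b \<in> Aut \<Omega> B"
proof -
  assume ab: "a \<in> \<Omega>" "b \<in> \<Omega>"
  show ?thesis
  proof (rule Aut_invol)
    fix x show "move B a b (move B a b x) = x" by (rule move_invol)
  next
    fix x assume "x \<notin> \<Omega>" then show "move B a b x = x" using move_out ab by blast
  next
    fix L assume "L \<in># B" then show "move B a b ` L \<in># B" using aut_line ab by blast
  qed
qed

end


context DD begin

lemma Aut_line:
  assumes g: "g \<in> Aut \<Omega> B"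
  shows "L \<in># B \<longleftrightarrow> g ` L \<in># B"
proof -
  have perm: "g permutes \<Omega>" and im: "image_mset (image g) B = B" using g unfolding Aut_def by auto
  have inj: "inj g" using permutes_inj[OF perm] .
  show ?thesis
  proof
    assume "L \<in># B"
    then have "g ` L \<in># image_mset (image g) B" by simp
    then show "g ` L \<in># B" using im by simp
  next
    assume "g ` L \<in># B"
    then have "g ` L \<in># image_mset (image g) B" using im by simp
    then obtain M where "M \<in># B" "g ` L = g ` M" by auto
    then show "L \<in># B" using inj by (simp add: inj_image_eq_iff)
  qed
qed

lemma conj_pt:
  assumes g: "g \<in> Aut \<Omega> B"
  shows "g (move B a b y) = move B (g a) (g b) (g y)"
proof -
  have perm: "g permutes \<Omega>" using g unfolding Aut_def by auto
  have inj: "inj g" using permutes_inj[OF perm] .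
  have gi: "\<And>x. g (inv g x) = x" using permutes_inverses(1)[OF perm] .
  have ig: "\<And>x. inv g (g x) = x" using permutes_inverses(2)[OF perm] .
  show ?thesis
  proof (cases "a = b")
    case True then show ?thesis by (simp add: move_id)
  next
    case ab: False
    then have gab: "g a \<noteq> g b" using inj by (simp add: inj_eq)
    show ?thesis
    proof (cases "y = a \<or> y = b")
      case True then show ?thesis using move_a move_b by auto
    next
      case False
      then have gy: "g y \<noteq> g a" "g y \<noteq> g b" using inj by (auto simp: inj_eq)
      show ?thesis
      proof (cases "col a b y")
        case True
        then obtain w where w: "{a,b,y,w} \<in># B" using col_ex[of a b y] ab False by auto
        then have "g ` {a,b,y,w} \<in># B" using Aut_line[OF g] by blast
        then have "{g a, g b, g y, g w} \<in># B" by simp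
        then show ?thesis using move_line[OF w] move_line by metis
      next
        case nc: False
        have "\<not> col (g a) (g b) (g y)"
        proof
          assume "col (g a) (g b) (g y)"
          then obtain w where w: "{g a, g b, g y, w} \<in># B" using col_ex[of "g a" "g b" "g y"] gab gy by auto
          have "g ` {a,b,y,inv g w} = {g a, g b, g y, w}" using gi by simp
          then have "{a,b,y,inv g w} \<in># B" using Aut_line[OF g] w by metis
          then show False using nc line_col by blast
        qed
        then show ?thesis using nc move_nocol ab False gab gy by simp
      qed
    qed
  qed
qed

lemma conj:
  assumes g: "g \<in> Aut \<Omega> B"
  shows "g \<circ> move B a b \<circ> inv g = move B (g a) (g b)"
proof (rule ext)
  fix x
  have perm: "g permutes \<Omega>" using g unfolding Aut_def by auto
  have gi: "g (inv g x) = x" using permutes_inverses(1)[OF perm] .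
  show "(g \<circ> move B a b \<circ> inv g) x = move B (g a) (g b) x"
    using conj_pt[OF g, of a b "inv g x"] gi by simp
qed

lemma inv_move: "inv (move B a b) = move B a b"
  by (rule inv_equality) (simp_all add: move_invol)

lemma conj_move:
  assumes "a \<in> \<Omega>" "b \<in> \<Omega>"
  shows "move B a b \<circ> move B c d \<circ> move B a b = move B (move B a b c) (move B a b d)"
  using conj[OF move_Aut[OF assms], of c d] by (simp add: inv_move)

lemma Aut_id: "id \<in> Aut \<Omega> B"
  unfolding Aut_def by (simp add: permutes_id image_mset.id)

lemma Aut_comp: "p \<in> Aut \<Omega> B \<Longrightarrow> q \<in> Aut \<Omega> B \<Longrightarrow> q \<circ> p \<in> Aut \<Omega> B"
proof -
  assume p: "p \<in> Aut \<Omega> B" and q: "q \<in> Aut \<Omega> B"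
  have "q \<circ> p permutes \<Omega>" using p q unfolding Aut_def by (auto intro: permutes_compose)
  moreover have "image_mset (image (q \<circ> p)) B = B"
  proof -
    have "image (q \<circ> p) = image q \<circ> image p" by (rule ext) (simp add: image_comp)
    then show ?thesis using p q unfolding Aut_def by (simp add: multiset.map_comp[symmetric])
  qed
  ultimately show ?thesis unfolding Aut_def by simp
qed

end



lemma move_seq_snoc: "xs \<noteq> [] \<Longrightarrow> move_seq B (xs @ [y]) = move B (last xs) y \<circ> move_seq B xs"
proof (induction xs)
  case Nil then show ?case by simp
next
  case (Cons x xs)
  show ?case
  proof (cases xs)
    case Nil then show ?thesis by simp
  next
    case (Cons x2 rest)
    then show ?thesis using Cons.IH by (simp add: o_assoc)
  qed
qed

lemma move_seq_cons: "zs \<noteq> [] \<Longrightarrow> move_seq B (y # zs) = move_seq B zs \<circ> move B y (hd zs)"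
  by (cases zs) auto

lemma move_seq_ind:
  assumes "P []" "\<And>a. P [a]" "\<And>a b rest. P (b # rest) \<Longrightarrow> P (a # b # rest)"
  shows "P xs"
  using assms by (induction xs rule: induct_list012) auto

context DD begin

lemma move_seq_Aut: "set xs \<subseteq> \<Omega> \<Longrightarrow> move_seq B xs \<in> Aut \<Omega> B"
  by (induction xs rule: move_seq_ind) (auto simp: Aut_id intro!: Aut_comp move_Aut)

definition EE where "EE = {move B a b | a b. a \<in> \<Omega> \<and> b \<in> \<Omega> \<and> a \<noteq> b}"

lemma move_gen: "a \<in> \<Omega> \<Longrightarrow> b \<in> \<Omega> \<Longrightarrow> move B a b \<in> gen_group EE"
  by (cases "a = b") (auto simp: move_id EE_def intro: gen_group.intros)

lemma move_seq_gen: "set xs \<subseteq> \<Omega> \<Longrightarrow> move_seq B xs \<in> gen_group EE"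
  by (induction xs rule: move_seq_ind) (auto intro: gen_group.intros move_gen)

lemma rev_seq: "move_seq B (rev xs) \<circ> move_seq B xs = id"
proof (induction xs rule: rev_induct)
  case Nil then show ?case by simp
next
  case (snoc y ys)
  show ?case
  proof (cases "ys = []")
    case True then show ?thesis by simp
  next
    case False
    have r: "rev ys \<noteq> []" using False by simp
    have h: "hd (rev ys) = last ys" using False by (simp add: hd_rev)
    have "move_seq B (rev (ys @ [y])) = move_seq B (rev ys) \<circ> move B y (last ys)"
      using move_seq_cons[OF r, of B y] h by simp
    moreover have "move_seq B (ys @ [y]) = move B (last ys) y \<circ> move_seq B ys"
      using move_seq_snoc[OF False] .
    ultimately have "move_seq B (rev (ys @ [y])) \<circ> move_seq B (ys @ [y]) =
       move_seq B (rev ys) \<circ> (move B y (last ys) \<circ> move B (last ys) y) \<circ> move_seq B ys"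
      by (simp add: o_assoc)
    also have "\<dots> = move_seq B (rev ys) \<circ> move_seq B ys"
    proof -
      have i: "move B y (last ys) \<circ> move B (last ys) y = id"
        by (rule ext) (simp add: move_invol move_sym[of y "last ys"])
      show ?thesis by (simp only: i comp_id)
    qed
    finally show ?thesis using snoc.IH by simp
  qed
qed

lemma inv_seq: "inv (move_seq B xs) = move_seq B (rev xs)"
  using rev_seq[of xs] rev_seq[of "rev xs"] by (intro inv_unique_comp) auto

lemma L_mem: "as \<noteq> [] \<Longrightarrow> set as \<subseteq> \<Omega> \<Longrightarrow> move_seq B (inf0 # as) \<in> L_inf \<Omega> B inf0"
  unfolding L_inf_def by blast

lemma noncol_id:
  assumes o: "e \<in> \<Omega>" "c \<in> \<Omega>" "d \<in> \<Omega>" and d: "distinct [e,c,d]" and nc: "\<not> col e c d"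
  shows "move B d e \<circ> move B c d \<circ> move B e c = move B c d"
proof -
  let ?s = "move B e c" and ?t = "move B e d" and ?m = "move B c d"
  have sd: "?s d = d" using move_nocol[of e c d] d nc by auto
  have tc: "?t c = c" using move_nocol[of e d c] d nc col_sym2[of e c d] by auto
  have 1: "?s \<circ> ?m \<circ> ?s = ?t" using conj_move[of e c c d] o sd by (simp add: move_a move_b)
  have 2: "?t \<circ> ?s \<circ> ?t = move B d c" using conj_move[of e d e c] o tc by (simp add: move_a move_b)
  have s1: "\<And>x. ?s (?s x) = x" and t1: "\<And>x. ?t (?t x) = x" by (simp_all add: move_invol)
  have h1: "\<And>x. ?s (?m (?s x)) = ?t x" using 1 by (metis comp_apply)
  have h2: "\<And>x. ?t (?s (?t x)) = ?m x" using 2 move_sym by (metis comp_apply)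
  have "\<And>x. ?t (?m (?s x)) = ?m x"
  proof -
    fix x
    have "\<And>z. ?s (?m z) = ?t (?s z)" using h1 s1 by metis
    then have "\<And>z. ?s (?s (?m z)) = ?s (?t (?s z))" by simp
    then have "\<And>z. ?m z = ?s (?t (?s z))" using s1 by simp
    then have "?m (?s x) = ?s (?t x)" using s1 by simp
    then show "?t (?m (?s x)) = ?m x" using h2 by simp
  qed
  then show ?thesis using move_sym[of d e] by (auto simp: fun_eq_iff)
qed

lemma step:
  assumes inf: "inf0 \<in> \<Omega>" and p: "p \<in> L_inf \<Omega> B inf0" and cd: "c \<in> \<Omega>" "d \<in> \<Omega>"
  shows "move B c d \<circ> p \<in> L_inf \<Omega> B inf0"
proof -
  obtain as where as: "as \<noteq> []" "set as \<subseteq> \<Omega>" "p = move_seq B (inf0 # as)"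
    using p unfolding L_inf_def by blast
  define e where "e = last as"
  have eO: "e \<in> \<Omega>" using as e_def by auto
  have app: "\<And>y. move_seq B (inf0 # as @ [y]) = move B e y \<circ> p"
    using move_seq_snoc[of "inf0 # as"] as e_def by simp
  have appm: "\<And>y. y \<in> \<Omega> \<Longrightarrow> move B e y \<circ> p \<in> L_inf \<Omega> B inf0"
  proof -
    fix y assume y: "y \<in> \<Omega>"
    have "move_seq B (inf0 # as @ [y]) \<in> L_inf \<Omega> B inf0" by (rule L_mem) (use as y in auto)
    then show "move B e y \<circ> p \<in> L_inf \<Omega> B inf0" using app by simp
  qed
  show ?thesis
  proof (cases "c = d")
    case True then show ?thesis using p by (simp add: move_id)
  next
    case cdne: False
    show ?thesis
    proof (cases "e = c")
      case True then show ?thesis using appm cd by blast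
    next
      case ec: False
      show ?thesis
      proof (cases "e = d")
        case True then show ?thesis using appm cd move_sym by metis
      next
        case ed: False
        show ?thesis
        proof (cases "col e c d")
          case True
          then obtain f where f: "{e,c,d,f} \<in># B" using col_ex[of e c d] ec ed cdne by auto
          have "{c,d,e,f} \<in># B" using f by (simp add: insert_commute)
          then have "move B c d = move B e f" by (rule swap)
          moreover have "f \<in> \<Omega>" using line_sub[OF f] by simp
          ultimately show ?thesis using appm by simp
        next
          case False
          have "move_seq B (inf0 # as @ [c,d,e]) = move B d e \<circ> move B c d \<circ> move B e c \<circ> p"
          proof -
            have "as @ [c,d,e] = ((as @ [c]) @ [d]) @ [e]" by simp
            then show ?thesis using move_seq_snoc[of "inf0 # as @ [c] @ [d]" B e]
                move_seq_snoc[of "inf0 # as @ [c]" B d] app[of c] by (simp add: o_assoc)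
          qed
          also have "\<dots> = move B c d \<circ> p"
            using noncol_id[OF eO cd] ec ed cdne False by (simp add: o_assoc)
          finally have eq: "move_seq B (inf0 # as @ [c,d,e]) = move B c d \<circ> p" .
          have "move_seq B (inf0 # as @ [c,d,e]) \<in> L_inf \<Omega> B inf0"
            by (rule L_mem) (use as cd eO in auto)
          then show ?thesis using eq by simp
        qed
      qed
    qed
  qed
qed

end


context DD begin

lemma clos_seq: "set xs \<subseteq> \<Omega> \<Longrightarrow> inf0 \<in> \<Omega> \<Longrightarrow> \<forall>p\<in>L_inf \<Omega> B inf0. move_seq B xs \<circ> p \<in> L_inf \<Omega> B inf0"
proof (induction xs rule: move_seq_ind)
  case (3 a b rest)
  show ?case
  proof
    fix p assume p: "p \<in> L_inf \<Omega> B inf0"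
    have "move B a b \<circ> p \<in> L_inf \<Omega> B inf0" using step[OF 3(3) p] 3(2) by simp
    moreover have "set (b # rest) \<subseteq> \<Omega>" using 3(2) by simp
    ultimately have "move_seq B (b # rest) \<circ> (move B a b \<circ> p) \<in> L_inf \<Omega> B inf0"
      using 3(1) 3(3) by blast
    then show "move_seq B (a # b # rest) \<circ> p \<in> L_inf \<Omega> B inf0" by (simp add: o_assoc)
  qed
qed simp_all

lemma id_Linf: "inf0 \<in> \<Omega> \<Longrightarrow> id \<in> L_inf \<Omega> B inf0"
proof -
  assume "inf0 \<in> \<Omega>"
  then have "move_seq B (inf0 # [inf0]) \<in> L_inf \<Omega> B inf0" by (intro L_mem) auto
  moreover have "move_seq B (inf0 # [inf0]) = id" by (simp add: move_id)
  ultimately show ?thesis by simp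
qed

lemma Linf_eq: "inf0 \<in> \<Omega> \<Longrightarrow> L_inf \<Omega> B inf0 = gen_group EE"
proof
  assume inf: "inf0 \<in> \<Omega>"
  show "L_inf \<Omega> B inf0 \<subseteq> gen_group EE"
    unfolding L_inf_def using inf by (auto intro!: move_seq_gen)
  show "gen_group EE \<subseteq> L_inf \<Omega> B inf0"
  proof
    fix g assume "g \<in> gen_group EE"
    then show "g \<in> L_inf \<Omega> B inf0"
    proof (induction rule: gen_group.induct)
      case gen_id then show ?case by (rule id_Linf[OF inf])
    next
      case (gen_base e)
      then obtain a b where "e = move B a b" "a \<in> \<Omega>" "b \<in> \<Omega>" unfolding EE_def by blast
      then show ?case using step[OF inf id_Linf[OF inf], of a b] by simp
    next
      case (gen_mult g h)
      then obtain as where "as \<noteq> []" "set as \<subseteq> \<Omega>" "h = move_seq B (inf0 # as)"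
        unfolding L_inf_def by blast
      then have "set (inf0 # as) \<subseteq> \<Omega>" "h = move_seq B (inf0 # as)" using inf by auto
      then show ?case using clos_seq[of "inf0 # as"] inf gen_mult.IH by blast
    next
      case (gen_inv g)
      then obtain as where as: "as \<noteq> []" "set as \<subseteq> \<Omega>" "g = move_seq B (inf0 # as)"
        unfolding L_inf_def by blast
      then have "inv g = move_seq B (rev (inf0 # as)) \<circ> id" by (simp add: inv_seq)
      moreover have "set (rev (inf0 # as)) \<subseteq> \<Omega>" using inf as by auto
      ultimately show ?case using clos_seq[of "rev (inf0 # as)"] inf id_Linf[OF inf] by metis
    qed
  qed
qed

lemma Linf_Aut: "inf0 \<in> \<Omega> \<Longrightarrow> L_inf \<Omega> B inf0 \<subseteq> Aut \<Omega> B"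
  unfolding L_inf_def by (auto intro!: move_seq_Aut)

definition PP :: "('a \<Rightarrow> 'a) \<Rightarrow> ('a \<Rightarrow> 'a) \<Rightarrow> bool" where
  "PP g h \<longleftrightarrow> h \<circ> g = g \<circ> h \<or> h \<circ> g \<circ> h = g \<circ> h \<circ> g"

lemma PP_sym: "PP g h \<Longrightarrow> PP h g" unfolding PP_def by auto

lemma PP_comm: "move B c d \<circ> move B a b \<circ> move B c d = move B a b \<Longrightarrow> PP (move B a b) (move B c d)"
  unfolding PP_def
proof (rule disjI1)
  let ?g = "move B a b" and ?h = "move B c d"
  assume "?h \<circ> ?g \<circ> ?h = ?g"
  then have e: "\<And>x. ?h (?g (?h x)) = ?g x" by (metis comp_apply)
  show "?h \<circ> ?g = ?g \<circ> ?h"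
  proof (rule ext)
    fix x
    have "?h (?g (?h (?h x))) = ?g (?h x)" by (rule e)
    then show "(?h \<circ> ?g) x = (?g \<circ> ?h) x" by (simp add: move_invol)
  qed
qed

lemma PP_order:
  assumes "PP (move B a b) (move B c d)"
  shows "(move B c d \<circ> move B a b) ^^ 2 = id \<or> (move B c d \<circ> move B a b) ^^ 3 = id"
proof -
  let ?g = "move B a b" and ?h = "move B c d"
  have gg: "\<And>x. ?g (?g x) = x" and hh: "\<And>x. ?h (?h x) = x" by (simp_all add: move_invol)
  from assms consider "?h \<circ> ?g = ?g \<circ> ?h" | "?h \<circ> ?g \<circ> ?h = ?g \<circ> ?h \<circ> ?g" unfolding PP_def by blast
  then show ?thesis
  proof cases
    case 1
    then have c: "\<And>x. ?h (?g x) = ?g (?h x)" by (metis comp_apply)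
    have "(?h \<circ> ?g) ^^ 2 = id"
      by (rule ext) (simp add: numeral_2_eq_2 c gg hh)
    then show ?thesis by simp
  next
    case 2
    then have c: "\<And>x. ?h (?g (?h x)) = ?g (?h (?g x))" by (metis comp_apply)
    have "(?h \<circ> ?g) ^^ 3 = id"
    proof (rule ext)
      fix x
      have "((?h \<circ> ?g) ^^ 3) x = ?h (?g (?h (?g (?h (?g x)))))" by (simp add: numeral_3_eq_3)
      also have "\<dots> = ?g (?h (?g (?g (?h (?g x)))))" by (rule c)
      also have "\<dots> = x" by (simp add: gg hh)
      finally show "((?h \<circ> ?g) ^^ 3) x = id x" by simp
    qed
    then show ?thesis by simp
  qed
qed

lemma shared:
  assumes o: "a \<in> \<Omega>" "b \<in> \<Omega>" "d \<in> \<Omega>" and dd: "distinct [a,b,d]"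
  shows "PP (move B a b) (move B a d)"
proof (cases "col a b d")
  case True
  then obtain f where f: "{a,b,d,f} \<in># B" using col_ex[of a b d] dd by auto
  have f2: "{a,d,b,f} \<in># B" using f by (simp add: insert_commute)
  have hb: "move B a d b = f" using move_line[OF f2] .
  have "move B a d \<circ> move B a b \<circ> move B a d = move B d f"
    using conj_move[of a d a b] o hb by (simp add: move_a)
  also have "\<dots> = move B a b"
  proof -
    have "{d,f,a,b} \<in># B" using f by (simp add: insert_commute)
    then show ?thesis by (rule swap)
  qed
  finally show ?thesis by (rule PP_comm)
next
  case False
  have hb: "move B a d b = b" using move_nocol[of a d b] dd False col_sym2[of a b d] by auto
  have gd: "move B a b d = d" using move_nocol[of a b d] dd False by auto
  have "move B a d \<circ> move B a b \<circ> move B a d = move B d b"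
    using conj_move[of a d a b] o hb by (simp add: move_a)
  moreover have "move B a b \<circ> move B a d \<circ> move B a b = move B b d"
    using conj_move[of a b a d] o gd by (simp add: move_a)
  ultimately show ?thesis unfolding PP_def using move_sym[of d b] by simp
qed

lemma disjD1:
  assumes o: "a \<in> \<Omega>" "b \<in> \<Omega>" "c \<in> \<Omega>" "d \<in> \<Omega>" and dd: "distinct [a,b,c,d]"
    and A: "{c,d,a,a'} \<in># B" and nb: "\<not> col c d b" and C: "{a,b,c,c'} \<in># B" and nd: "\<not> col a b d"
  shows "PP (move B a b) (move B c d)"
proof -
  have ha: "move B c d a = a'" using move_line[OF A] .
  have hb: "move B c d b = b" using move_nocol[of c d b] dd nb by auto
  have gc: "move B a b c = c'" using move_line[OF C] .
  have gd: "move B a b d = d" using move_nocol[of a b d] dd nd by auto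
  have dA: "distinct [c,d,a,a']" using line_distinct[OF A] .
  have a'b: "a' \<noteq> b"
  proof
    assume "a' = b"
    then have "{c,d,b,a} \<in># B" using A by (simp add: insert_commute)
    then show False using nb line_col by blast
  qed
  have A1: "{a,c,d,a'} \<in># B" using A by (simp add: insert_commute)
  have C1: "{a,c,b,c'} \<in># B" using C by (simp add: insert_commute)
  have "b \<notin> {a,c,d,a'}" using dd a'b by auto
  then have "{a,c,d,a'} \<noteq> {a,c,b,c'}" by blast
  then have "{d,a',b,c'} \<in># B" using tri4[OF A1 C1] by simp
  then have "{a',b,d,c'} \<in># B" by (simp add: insert_commute)
  then have sw: "move B a' b = move B d c'" by (rule swap)
  have "move B c d \<circ> move B a b \<circ> move B c d = move B a' b"
    using conj_move[of c d a b] o ha hb by simp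
  moreover have "move B a b \<circ> move B c d \<circ> move B a b = move B c' d"
    using conj_move[of a b c d] o gc gd by simp
  ultimately show ?thesis unfolding PP_def using sw move_sym[of d c'] by simp
qed

lemma disjD:
  assumes o: "a \<in> \<Omega>" "b \<in> \<Omega>" "c \<in> \<Omega>" "d \<in> \<Omega>" and dd: "distinct [a,b,c,d]"
    and ca: "col c d a" and nb: "\<not> col c d b"
  shows "PP (move B a b) (move B c d)"
proof -
  obtain a' where A: "{c,d,a,a'} \<in># B" using col_ex[of c d a] ca dd by auto
  have "col a c d" using ca col_sym1 col_sym2 by metis
  moreover have "\<not> col b c d" using nb col_sym1 col_sym2 by metis
  ultimately have x: "col a b d \<noteq> col a b c" using parity[of a b c d] dd o by auto
  show ?thesis
  proof (cases "col a b c")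
    case True
    then have nd: "\<not> col a b d" using x by simp
    obtain c' where C: "{a,b,c,c'} \<in># B" using col_ex[of a b c] True dd by auto
    show ?thesis using disjD1[OF o dd A nb C nd] .
  next
    case False
    then have cd: "col a b d" using x by simp
    obtain d' where D: "{a,b,d,d'} \<in># B" using col_ex[of a b d] cd dd by auto
    have A': "{d,c,a,a'} \<in># B" using A by (simp add: insert_commute)
    have nb': "\<not> col d c b" using nb col_sym1 by metis
    have "distinct [a,b,d,c]" using dd by auto
    from disjD1[OF o(1,2,4,3) this A' nb' D False] show ?thesis by (simp add: move_sym[of d c])
  qed
qed

lemma disj_PP:
  assumes o: "a \<in> \<Omega>" "b \<in> \<Omega>" "c \<in> \<Omega>" "d \<in> \<Omega>" and dd: "distinct [a,b,c,d]"
  shows "PP (move B a b) (move B c d)"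
proof (cases "col c d a")
  case ca: True
  show ?thesis
  proof (cases "col c d b")
    case cb: True
    obtain a' where A: "{c,d,a,a'} \<in># B" using col_ex[of c d a] ca dd by auto
    obtain b' where Bb: "{c,d,b,b'} \<in># B" using col_ex[of c d b] cb dd by auto
    have ha: "move B c d a = a'" using move_line[OF A] .
    have hb: "move B c d b = b'" using move_line[OF Bb] .
    show ?thesis
    proof (cases "a' = b")
      case True
      have "move B c d b = a" using ha True move_invol[of c d a] by simp
      then have "move B c d \<circ> move B a b \<circ> move B c d = move B a b"
        using conj_move[of c d a b] o ha True move_sym[of b a] by simp
      then show ?thesis by (rule PP_comm)
    next
      case False
      have "b \<notin> {c,d,a,a'}" using dd False by auto
      then have "{c,d,a,a'} \<noteq> {c,d,b,b'}" by blast
      then have "{a,a',b,b'} \<in># B" using tri4[OF A Bb] by simp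
      then have "{a,b,a',b'} \<in># B" by (simp add: insert_commute)
      then have sw: "move B a b = move B a' b'" by (rule swap)
      have "move B c d \<circ> move B a b \<circ> move B c d = move B a b"
        using conj_move[of c d a b] o ha hb sw by simp
      then show ?thesis by (rule PP_comm)
    qed
  next
    case False
    then show ?thesis using disjD[OF o dd ca] by simp
  qed
next
  case na: False
  show ?thesis
  proof (cases "col c d b")
    case True
    have "distinct [b,a,c,d]" using dd by auto
    from disjD[OF o(2,1,3,4) this True na] show ?thesis by (simp add: move_sym[of b a])
  next
    case False
    have ha: "move B c d a = a" using move_nocol[of c d a] dd na by auto
    have hb: "move B c d b = b" using move_nocol[of c d b] dd False by auto
    have "move B c d \<circ> move B a b \<circ> move B c d = move B a b"
      using conj_move[of c d a b] o ha hb by simp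
    then show ?thesis by (rule PP_comm)
  qed
qed

lemma all_PP:
  assumes o: "a \<in> \<Omega>" "b \<in> \<Omega>" "c \<in> \<Omega>" "d \<in> \<Omega>" and ab: "a \<noteq> b" and cd: "c \<noteq> d"
  shows "PP (move B a b) (move B c d)"
proof -
  have same: "\<And>g. PP g g" unfolding PP_def by simp
  consider "a = c" | "a = d" | "b = c" | "b = d" | "distinct [a,b,c,d]" using ab cd by auto
  then show ?thesis
  proof cases
    case 1
    show ?thesis
    proof (cases "b = d")
      case True then show ?thesis using 1 same by simp
    next
      case False then show ?thesis using shared[of a b d] o ab cd 1 by simp
    qed
  next
    case 2
    show ?thesis
    proof (cases "b = c")
      case True then show ?thesis using 2 same move_sym[of a b] by simp
    next
      case False then have "PP (move B a b) (move B a c)" using shared[of a b c] o ab cd 2 by simp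
      then show ?thesis using 2 move_sym[of c d] by simp
    qed
  next
    case 3
    show ?thesis
    proof (cases "a = d")
      case True then show ?thesis using 3 same move_sym[of a b] by simp
    next
      case False then have "PP (move B b a) (move B b d)" using shared[of b a d] o ab cd 3 by simp
      then show ?thesis using 3 move_sym[of a b] by simp
    qed
  next
    case 4
    show ?thesis
    proof (cases "a = c")
      case True then show ?thesis using 4 same by simp
    next
      case False then have "PP (move B b a) (move B b c)" using shared[of b a c] o ab cd 4 by simp
      then show ?thesis using 4 move_sym[of a b] move_sym[of c d] by simp
    qed
  next
    case 5 then show ?thesis using disj_PP o by simp
  qed
qed

end

theorem theorem4p2:
  fixes \<Omega> :: "'a set" and \<B> :: "'a set multiset" and lam :: nat and inf0 :: 'a
  assumes "design_2_4 \<Omega> \<B> lam"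
    and "supersimple \<B>"
    and "property_triangle \<B>"
    and "regular_two_graph \<Omega> (collinear_triples \<Omega> \<B>)"
    and "inf0 \<in> \<Omega>"
  shows "is_subgroup_of (L_inf \<Omega> \<B> inf0) (Aut \<Omega> \<B>)
    \<and> three_transposition_group (L_inf \<Omega> \<B> inf0) {move \<B> a b | a b. a \<in> \<Omega> \<and> b \<in> \<Omega> \<and> a \<noteq> b}"
proof -
  interpret DD \<Omega> \<B> lam using assms(1-4) by unfold_locales
  have inf: "inf0 \<in> \<Omega>" by (rule assms(5))
  have E: "{move \<B> a b | a b. a \<in> \<Omega> \<and> b \<in> \<Omega> \<and> a \<noteq> b} = EE" by (simp add: EE_def)
  have G: "L_inf \<Omega> \<B> inf0 = gen_group EE" using Linf_eq[OF inf] .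
  have sub: "is_subgroup_of (L_inf \<Omega> \<B> inf0) (Aut \<Omega> \<B>)"
    unfolding is_subgroup_of_def G
    using Linf_Aut[OF inf] G id_Linf[OF inf] by (auto intro: gen_group.intros)
  have t1: "\<forall>e\<in>EE. e \<circ> e = id \<and> e \<noteq> id"
  proof
    fix e assume "e \<in> EE"
    then obtain a b where e: "e = move \<B> a b" "a \<noteq> b" unfolding EE_def by blast
    have "e \<circ> e = id" using e by (simp add: fun_eq_iff move_invol)
    moreover have "e a \<noteq> id a" using e by (simp add: move_a)
    ultimately show "e \<circ> e = id \<and> e \<noteq> id" by auto
  qed
  have t3: "\<forall>g\<in>L_inf \<Omega> \<B> inf0. \<forall>e\<in>EE. g \<circ> e \<circ> inv g \<in> EE"
  proof (intro ballI)
    fix g e assume g: "g \<in> L_inf \<Omega> \<B> inf0" and "e \<in> EE"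
    then obtain a b where e: "e = move \<B> a b" "a \<noteq> b" "a \<in> \<Omega>" "b \<in> \<Omega>" unfolding EE_def by blast
    have gA: "g \<in> Aut \<Omega> \<B>" using g Linf_Aut[OF inf] by blast
    then have perm: "g permutes \<Omega>" unfolding Aut_def by simp
    have "g \<circ> e \<circ> inv g = move \<B> (g a) (g b)" using conj[OF gA] e by simp
    moreover have "g a \<noteq> g b" using permutes_inj[OF perm] e by (simp add: inj_eq)
    moreover have "g a \<in> \<Omega>" "g b \<in> \<Omega>" using perm e by (simp_all add: permutes_in_image)
    ultimately show "g \<circ> e \<circ> inv g \<in> EE" unfolding EE_def by blast
  qed
  have t4: "\<forall>g\<in>EE. \<forall>h\<in>EE. (h \<circ> g) ^^ 2 = id \<or> (h \<circ> g) ^^ 3 = id"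
  proof (intro ballI)
    fix g h assume "g \<in> EE" "h \<in> EE"
    then obtain a b c d where "g = move \<B> a b" "a \<noteq> b" "a \<in> \<Omega>" "b \<in> \<Omega>"
      "h = move \<B> c d" "c \<noteq> d" "c \<in> \<Omega>" "d \<in> \<Omega>" unfolding EE_def by blast
    then show "(h \<circ> g) ^^ 2 = id \<or> (h \<circ> g) ^^ 3 = id" using PP_order all_PP by simp
  qed
  have "three_transposition_group (L_inf \<Omega> \<B> inf0) EE"
    unfolding three_transposition_group_def using t1 G t3 t4 by blast
  then show ?thesis using sub E by simp
qed



end
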